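(* Let $d_1,d_2\ge 2$ and let $\rho$ be a density matrix on $\mathbb{C}^{d_1}\otimes\mathbb{C}^{d_2}$. Let $\mathcal{P}=\{P_j\}_{j=1}^{d_1^2}$ be a general SIC-POVM on $\mathbb{C}^{d_1}$ with parameter $a_1$ and $\mathcal{Q}=\{Q_k\}_{k=1}^{d_2^2}$ a general SIC-POVM on $\mathbb{C}^{d_2}$ with parameter $a_2$. Let $d=\min\{d_1^2,d_2^2\}$ and define $$J(\rho)=\max_{\sigma,\tau}\sum_{j=1}^{d}\mathrm{Tr}\big[(P_{\sigma(j)}\otimes Q_{\tau(j)})\rho\big],$$ where the maximum runs over all injective maps $\sigma:\{1,\dots,d\}\to\{1,\dots,d_1^2\}$ and $\tau:\{1,\dots,d\}\to\{1,\dots,d_2^2\}$. If $\rho$ is separable, then $$J(\rho)\le \frac12\left[\frac{a_1d_1^2+1}{d_1(d_1+1)}+\frac{a_2d_2^2+1}{d_2(d_2+1)}\right].$$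
   Context: A general SIC-POVM on $\mathbb{C}^{n}$ with parameter $a$ is a set of $n^2$ positive semidefinite operators $\{P_\alpha\}_{\alpha=1}^{n^2}$ on $\mathbb{C}^{n}$ such that $\sum_{\alpha=1}^{n^2}P_\alpha=I$, $\mathrm{Tr}(P_\alpha^2)=a$ for all $\alpha$, and $\mathrm{Tr}(P_\alpha P_\beta)=\frac{1-na}{n(n^2-1)}$ for all $\alpha\neq\beta$; here $\frac{1}{n^3}<a\le\frac{1}{n^2}$. A density matrix on $\mathbb{C}^{d_1}\otimes\mathbb{C}^{d_2}$ is separable if it is a convex combination of product states $\rho_A\otimes\rho_B$. *)

theory Defs
  imports "HOL-Analysis.Analysis"
begin

text \<open>Square complex matrices indexed by a finite type 'n (so they act on C^CARD('n)).\<close>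

definition mtrace :: "complex^'n::finite^'n \<Rightarrow> complex" where
  "mtrace A = (\<Sum>i\<in>UNIV. A $ i $ i)"

definition adjoint :: "complex^'n^'n \<Rightarrow> complex^'n^'n" where
  "adjoint A = (\<chi> i j. cnj (A $ j $ i))"

definition hermitian :: "complex^'n^'n \<Rightarrow> bool" where
  "hermitian A \<longleftrightarrow> adjoint A = A"

definition psd :: "complex^'n::finite^'n \<Rightarrow> bool" where
  "psd A \<longleftrightarrow> hermitian A \<and>
     (\<forall>v :: complex^'n. 0 \<le> Re (\<Sum>i\<in>UNIV. cnj (v $ i) * (A *v v) $ i))"

definition density :: "complex^'n::finite^'n \<Rightarrow> bool" where
  "density A \<longleftrightarrow> psd A \<and> mtrace A = 1"

text \<open>Kronecker (tensor) product; C^d1 (x) C^d2 is indexed by pairs.\<close>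
definition kron :: "complex^'a^'a \<Rightarrow> complex^'b^'b \<Rightarrow> complex^('a \<times> 'b)^('a \<times> 'b)" where
  "kron A B = (\<chi> r c. A $ fst r $ fst c * B $ snd r $ snd c)"

definition separable :: "complex^('a::finite \<times> 'b::finite)^('a \<times> 'b) \<Rightarrow> bool" where
  "separable \<rho> \<longleftrightarrow> (\<exists>(m::nat) (p::nat \<Rightarrow> real) (A :: nat \<Rightarrow> complex^'a^'a) (B :: nat \<Rightarrow> complex^'b^'b).
      (\<forall>i<m. 0 \<le> p i \<and> density (A i) \<and> density (B i)) \<and>
      (\<Sum>i<m. p i) = 1 \<and>
      \<rho> = (\<Sum>i<m. of_real (p i) *s kron (A i) (B i)))"

text \<open>General SIC-POVM on C^n, n = CARD('n), with parameter a; elements indexed by 0..<n^2.\<close>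
definition general_sic_povm :: "(nat \<Rightarrow> complex^'n::finite^'n) \<Rightarrow> real \<Rightarrow> bool" where
  "general_sic_povm P a \<longleftrightarrow>
     (let n = CARD('n) in
       1 / real n ^ 3 < a \<and> a \<le> 1 / real n ^ 2 \<and>
       (\<forall>\<alpha><n^2. psd (P \<alpha>)) \<and>
       (\<Sum>\<alpha><n^2. P \<alpha>) = mat 1 \<and>
       (\<forall>\<alpha><n^2. mtrace (P \<alpha> ** P \<alpha>) = of_real a) \<and>
       (\<forall>\<alpha><n^2. \<forall>\<beta><n^2. \<alpha> \<noteq> \<beta> \<longrightarrow>
          mtrace (P \<alpha> ** P \<beta>) = of_real ((1 - real n * a) / (real n * (real n ^ 2 - 1)))))"

text \<open>J(rho): maximum over injective sigma: {0..<d} -> {0..<d1^2}, tau: {0..<d} -> {0..<d2^2},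
  d = min d1^2 d2^2. The trace is real for psd arguments; we take its real part.\<close>
definition J_val :: "(nat \<Rightarrow> complex^'a::finite^'a) \<Rightarrow> (nat \<Rightarrow> complex^'b::finite^'b) \<Rightarrow> complex^('a \<times> 'b)^('a \<times> 'b) \<Rightarrow> real" where
  "J_val P Q \<rho> = (let d1 = CARD('a); d2 = CARD('b); d = min (d1^2) (d2^2) in
     Max {Re (\<Sum>j<d. mtrace (kron (P (\<sigma> j)) (Q (\<tau> j)) ** \<rho>)) | \<sigma> \<tau>.
            inj_on \<sigma> {..<d} \<and> \<sigma> ` {..<d} \<subseteq> {..<d1^2} \<and>
            inj_on \<tau> {..<d} \<and> \<tau> ` {..<d} \<subseteq> {..<d2^2}})"

end

theory Submission
  imports Defs
begin


lemma tr_mul: "mtrace (X ** Y) = (\<Sum>i\<in>UNIV. \<Sum>k\<in>UNIV. X$i$k * Y$k$i)"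
  by (simp add: mtrace_def matrix_matrix_mult_def)

lemma tr_comm: "mtrace (X ** Y) = mtrace (Y ** X)"
  unfolding tr_mul by (subst sum.swap) (simp add: mult.commute)

lemma tr_add_l: "mtrace ((X + Y) ** Z) = mtrace (X ** Z) + mtrace (Y ** Z)"
  by (simp add: tr_mul algebra_simps sum.distrib)
lemma tr_diff_l: "mtrace ((X - Y) ** Z) = mtrace (X ** Z) - mtrace (Y ** Z)"
  by (simp add: tr_mul algebra_simps sum_subtractf)
lemma of_real_vec_nth: "(of_real r :: 'a::real_algebra_1^'n) $ i = of_real r"
  by (simp add: of_real_def scaleR_vec_def)
lemma tr_scale_l: "mtrace ((of_real r *s X) ** Z) = of_real r * mtrace (X ** Z)"
  by (simp add: tr_mul sum_distrib_left mult.assoc of_real_vec_nth)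
lemma tr_zero_l: "mtrace ((0::complex^'n::finite^'n) ** Z) = 0"
  by (simp add: mtrace_def)
lemma tr0: "mtrace (0::complex^'n::finite^'n) = 0" by (simp add: mtrace_def)
lemma tr_sum_l: "mtrace ((sum f S) ** Z) = (\<Sum>i\<in>S. mtrace (f i ** Z))"
  by (induct S rule: infinite_finite_induct) (simp_all add: tr_add_l tr0)
lemma tr_add_r: "mtrace (Z ** (X + Y)) = mtrace (Z ** X) + mtrace (Z ** Y)"
  by (simp add: tr_comm[of Z] tr_add_l)
lemma tr_diff_r: "mtrace (Z ** (X - Y)) = mtrace (Z ** X) - mtrace (Z ** Y)"
  by (simp add: tr_comm[of Z] tr_diff_l)
lemma tr_scale_r: "mtrace (Z ** (of_real r *s X)) = of_real r * mtrace (Z ** X)"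
  by (simp add: tr_comm[of Z] tr_scale_l)
lemma tr_sum_r: "mtrace (Z ** (sum f S)) = (\<Sum>i\<in>S. mtrace (Z ** f i))"
  by (simp add: tr_comm[of Z] tr_sum_l)
lemma tr_id_l: "mtrace (mat 1 ** Z) = mtrace Z" by simp
lemma tr_id_r: "mtrace (Z ** mat 1) = mtrace Z" by simp
lemma tr_id: "mtrace (mat 1 :: complex^'n::finite^'n) = of_nat CARD('n)"
  by (simp add: mtrace_def mat_def)

lemma adj_nth: "adjoint X $ i $ j = cnj (X $ j $ i)"
  by (simp add: adjoint_def)
lemma herm_iff: "hermitian X \<longleftrightarrow> (\<forall>i j. X$i$j = cnj (X$j$i))"
  unfolding hermitian_def vec_eq_iff adj_nth by (metis complex_cnj_cnj)
lemma herm_nth: "hermitian X \<Longrightarrow> X$i$j = cnj (X$j$i)"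
  using herm_iff by blast

lemma adj_add: "adjoint (X + Y) = adjoint X + adjoint Y"
  by (simp add: vec_eq_iff adj_nth)
lemma adj_diff: "adjoint (X - Y) = adjoint X - adjoint Y"
  by (simp add: vec_eq_iff adj_nth)
lemma adj_scale: "adjoint (of_real c *s X) = of_real c *s adjoint X"
  by (simp add: vec_eq_iff adj_nth of_real_vec_nth)
lemma adj_zero: "adjoint (0::complex^'n^'n) = 0"
  by (simp add: vec_eq_iff adj_nth)
lemma adj_id: "adjoint (mat 1::complex^'n^'n) = mat 1"
  by (simp add: vec_eq_iff adj_nth mat_def)

lemma herm_add: "hermitian X \<Longrightarrow> hermitian Y \<Longrightarrow> hermitian (X + Y)"
  by (simp add: hermitian_def adj_add)
lemma herm_diff: "hermitian X \<Longrightarrow> hermitian Y \<Longrightarrow> hermitian (X - Y)"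
  by (simp add: hermitian_def adj_diff)
lemma herm_scale: "hermitian X \<Longrightarrow> hermitian (of_real c *s X)"
  by (simp add: hermitian_def adj_scale)
lemma herm_zero: "hermitian (0::complex^'n^'n)"
  by (simp add: hermitian_def adj_zero)
lemma herm_sum: "(\<And>i. i \<in> S \<Longrightarrow> hermitian (f i)) \<Longrightarrow> hermitian (sum f S)"
  by (induct S rule: infinite_finite_induct) (simp_all add: herm_zero herm_add)
lemma herm_id: "hermitian (mat 1 :: complex^'n^'n)"
  by (simp add: hermitian_def adj_id)

lemma tr_herm_real: "hermitian X \<Longrightarrow> hermitian Y \<Longrightarrow> cnj (mtrace (X ** Y)) = mtrace (X ** Y)"
proof -
  assume h: "hermitian X" "hermitian Y"
  have "cnj (mtrace (X ** Y)) = (\<Sum>i\<in>UNIV. \<Sum>k\<in>UNIV. cnj (X$i$k) * cnj (Y$k$i))"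
    by (simp add: tr_mul)
  also have "\<dots> = (\<Sum>i\<in>UNIV. \<Sum>k\<in>UNIV. X$k$i * Y$i$k)"
    using herm_nth[OF h(1)] herm_nth[OF h(2)] by (intro sum.cong refl) (metis complex_cnj_cnj)
  also have "\<dots> = mtrace (X ** Y)"
    unfolding tr_mul by (subst sum.swap) (simp add: mult.commute)
  finally show ?thesis .
qed

lemma tr_herm_of_real: "hermitian X \<Longrightarrow> hermitian Y \<Longrightarrow> mtrace (X ** Y) = of_real (Re (mtrace (X ** Y)))"
  using tr_herm_real[of X Y] by (auto simp: complex_eq_iff)

lemma tr_herm_sq: "hermitian X \<Longrightarrow> 0 \<le> Re (mtrace (X ** X))"
proof -
  assume h: "hermitian X"
  have "mtrace (X ** X) = (\<Sum>i\<in>UNIV. \<Sum>k\<in>UNIV. X$i$k * cnj (X$i$k))"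
    unfolding tr_mul using herm_nth[OF h] by (intro sum.cong refl) metis
  also have "\<dots> = of_real (\<Sum>i\<in>UNIV. \<Sum>k\<in>UNIV. (cmod (X$i$k))^2)"
    by (simp add: complex_mult_cnj cmod_def)
  finally show ?thesis by (simp add: sum_nonneg)
qed



lemma sum_if_mult: fixes i :: "'n::finite" shows "(\<Sum>l\<in>UNIV. (if l = i then c else 0) * f l) = c * (f i :: 'a::comm_ring_1)"
proof -
  have "(\<Sum>l\<in>UNIV. (if l = i then c else 0) * f l) = (\<Sum>l\<in>UNIV. if l = i then c * f i else 0)"
    by (intro sum.cong) auto
  then show ?thesis by simp
qed
lemma sum_mult_if: fixes i :: "'n::finite" shows "(\<Sum>l\<in>UNIV. f l * (if l = i then c else 0)) = (f i :: 'a::comm_ring_1) * c"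
  using sum_if_mult[of i c f] by (simp add: mult.commute)
lemma cnj_if: "cnj (if P then a else 0) = (if P then cnj a else 0)" by simp

lemma quad_form:
  fixes A :: "complex^'n::finite^'n" and i k :: 'n and x y :: complex
  defines "v \<equiv> (\<chi> l. (if l = i then x else 0) + (if l = k then y else 0))"
  shows "(\<Sum>l\<in>UNIV. cnj (v $ l) * (A *v v) $ l) =
     cnj x * (A$i$i * x + A$i$k * y) + cnj y * (A$k$i * x + A$k$k * y)"
proof -
  have Av: "(A *v v) $ l = A$l$i * x + A$l$k * y" for l
    unfolding v_def matrix_vector_mult_def
    by (simp add: distrib_left sum.distrib sum_mult_if)
  show ?thesis unfolding Av unfolding v_def
    by (simp add: distrib_right sum.distrib sum_if_mult cnj_if del: complex_cnj_zero_iff)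
qed

lemma psd_quad: "psd A \<Longrightarrow> 0 \<le> Re (\<Sum>l\<in>UNIV. cnj (v $ l) * (A *v v) $ l)"
  by (simp add: psd_def)

lemma psd_diag: assumes "psd A" shows "0 \<le> Re (A$i$i)"
  using psd_quad[OF assms, of "\<chi> l. (if l = i then 1 else 0) + (if l = i then 0 else 0)"]
  unfolding quad_form by simp

lemma disc_real:
  fixes al ga w :: real
  assumes "\<And>t. 0 \<le> al * t^2 - 2 * t * w + ga * w" "0 \<le> al" "0 \<le> ga" "0 \<le> w"
  shows "w \<le> al * ga"
proof (cases "w = 0")
  case True then show ?thesis using assms by simp
next
  case False
  show ?thesis
  proof (cases "al = 0")
    case True
    have "0 \<le> al * ((ga*w+1)/(2*w))^2 - 2 * ((ga*w+1)/(2*w)) * w + ga * w" by (rule assms(1))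
    also have "\<dots> = -1" using True False by (simp add: field_simps)
    finally show ?thesis by simp
  next
    case False
    then have al: "al > 0" using assms by simp
    have "0 \<le> al * (w/al)^2 - 2 * (w/al) * w + ga * w" by (rule assms(1))
    also have "\<dots> = (w / al) * (al*ga - w)" using al by (simp add: field_simps power2_eq_square)
    finally have "0 \<le> (w / al) * (al*ga - w)" .
    moreover have "w / al > 0" using al \<open>w \<noteq> 0\<close> assms(4) by simp
    ultimately have "0 \<le> (al*ga - w)" using mult_pos_neg[of "w/al" "al*ga - w"] by linarith
    then show ?thesis by simp
  qed
qed

lemma psd_offdiag:
  assumes "psd A" shows "(cmod (A$i$k))^2 \<le> Re (A$i$i) * Re (A$k$k)"
proof -
  have h: "hermitian A" using assms by (simp add: psd_def)
  define z where "z = A$i$k"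
  have zk: "A$k$i = cnj z" using herm_nth[OF h, of k i] z_def by simp
  have q: "0 \<le> Re (A$i$i) * t^2 - 2 * t * (cmod z)^2 + Re (A$k$k) * (cmod z)^2" for t
  proof -
    have "0 \<le> Re (cnj (of_real t) * (A$i$i * of_real t + A$i$k * (- cnj z)) + cnj (- cnj z) * (A$k$i * of_real t + A$k$k * (- cnj z)))"
      using psd_quad[OF assms, of "\<chi> l. (if l = i then of_real t else 0) + (if l = k then - cnj z else 0)"]
      unfolding quad_form .
    also have "\<dots> = Re (A$i$i) * t^2 - 2 * t * (cmod z)^2 + Re (A$k$k) * (cmod z)^2"
      unfolding zk z_def[symmetric]
      by (simp add: algebra_simps power2_eq_square complex_mult_cnj cmod_def)
    finally show ?thesis .
  qed
  show ?thesis unfolding z_def[symmetric]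
    by (rule disc_real[OF q]) (auto intro: psd_diag[OF assms])
qed

lemma density_purity:
  fixes A :: "complex^'n::finite^'n"
  assumes "density A" shows "Re (mtrace (A ** A)) \<le> 1"
proof -
  have p: "psd A" and t: "mtrace A = 1" using assms by (auto simp: density_def)
  have h: "hermitian A" using p by (simp add: psd_def)
  have "mtrace (A ** A) = (\<Sum>i\<in>UNIV. \<Sum>k\<in>UNIV. A$i$k * cnj (A$i$k))"
    unfolding tr_mul using herm_nth[OF h] by (intro sum.cong refl) metis
  also have "\<dots> = of_real (\<Sum>i\<in>UNIV. \<Sum>k\<in>UNIV. (cmod (A$i$k))^2)"
    by (simp add: complex_mult_cnj cmod_def)
  finally have "Re (mtrace (A ** A)) = (\<Sum>i\<in>UNIV. \<Sum>k\<in>UNIV. (cmod (A$i$k))^2)" by simp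
  also have "\<dots> \<le> (\<Sum>i\<in>UNIV. \<Sum>k\<in>UNIV. Re (A$i$i) * Re (A$k$k))"
    by (intro sum_mono psd_offdiag[OF p])
  also have "\<dots> = (\<Sum>i\<in>UNIV. Re (A$i$i)) * (\<Sum>k\<in>UNIV. Re (A$k$k))"
    by (simp add: sum_product)
  also have "(\<Sum>i\<in>UNIV. Re (A$i$i)) = 1" using t by (simp add: mtrace_def flip: Re_sum)
  finally show ?thesis by simp
qed



lemma sic_bound:
  fixes P :: "nat \<Rightarrow> complex^'n::finite^'n" and A :: "complex^'n^'n" and a :: real
  assumes n2: "CARD('n) \<ge> 2" and sic: "general_sic_povm P a" and dA: "density A"
  shows "(\<Sum>\<alpha><CARD('n)^2. (Re (mtrace (P \<alpha> ** A)))^2)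
           \<le> (a * real CARD('n)^2 + 1) / (real CARD('n) * (real CARD('n) + 1))"
proof -
  define n where "n = real CARD('n)"
  define N where "N = CARD('n)^2"
  define b where "b = (1 - n*a)/(n*(n^2-1))"
  from sic have ha: "1/n^3 < a" and psdP: "\<forall>\<alpha><N. psd (P \<alpha>)"
    and sumP: "(\<Sum>\<alpha><N. P \<alpha>) = mat 1"
    and TPP1: "\<forall>\<alpha><N. mtrace (P \<alpha> ** P \<alpha>) = of_real a"
    and TPP2: "\<forall>\<alpha><N. \<forall>\<beta><N. \<alpha> \<noteq> \<beta> \<longrightarrow> mtrace (P \<alpha> ** P \<beta>) = of_real b"
    unfolding general_sic_povm_def Let_def n_def N_def b_def by auto
  have n: "n \<ge> 2" using n2 n_def by simp
  have hP: "hermitian (P \<alpha>)" if "\<alpha> < N" for \<alpha> using psdP that by (simp add: psd_def)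
  have hA: "hermitian A" and trA: "mtrace A = 1" using dA by (auto simp: density_def psd_def)
  have TPP: "mtrace (P \<alpha> ** P \<beta>) = of_real (b + (if \<beta> = \<alpha> then a - b else 0))"
    if "\<alpha> < N" "\<beta> < N" for \<alpha> \<beta>
    using TPP1 TPP2 that by auto
  define c where "c \<alpha> = Re (mtrace (P \<alpha> ** A))" for \<alpha>
  have cc: "mtrace (P \<alpha> ** A) = of_real (c \<alpha>)" if "\<alpha> < N" for \<alpha>
    using tr_herm_of_real[OF hP[OF that] hA] c_def by simp
  have "of_real (\<Sum>\<alpha><N. c \<alpha>) = (\<Sum>\<alpha><N. mtrace (P \<alpha> ** A))" by (simp add: cc)
  also have "\<dots> = mtrace ((\<Sum>\<alpha><N. P \<alpha>) ** A)" by (simp add: tr_sum_l)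
  also have "\<dots> = 1" using sumP trA by simp
  finally have sumc: "(\<Sum>\<alpha><N. c \<alpha>) = 1" by (metis of_real_eq_1_iff)
  define S where "S = (\<Sum>\<alpha><N. (c \<alpha>)^2)"
  define M where "M = (\<Sum>\<alpha><N. of_real (c \<alpha>) *s P \<alpha>)"
  have n21: "n^2 - 1 > 0" using n by (simp add: power2_eq_square) (smt (verit) mult_le_cancel_right1)
  have nz: "n*(n^2-1) \<noteq> 0" using n n21 by (metis less_numeral_extra(3) mult_eq_0_iff not_numeral_le_zero)
  have hb0: "b * (n*(n^2-1)) = 1 - n*a" unfolding b_def using nz by simp
  have hb: "b * (n^2-1) * n = 1 - n*a" using hb0 by (simp add: algebra_simps)
  have tPI: "mtrace (P \<alpha>) = of_real (1/n)" if "\<alpha> < N" for \<alpha>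
  proof -
    have "mtrace (P \<alpha>) = mtrace (P \<alpha> ** (\<Sum>\<beta><N. P \<beta>))" using sumP by simp
    also have "\<dots> = (\<Sum>\<beta><N. of_real (b + (if \<beta> = \<alpha> then a - b else 0)))"
      by (simp add: tr_sum_r TPP that)
    also have "\<dots> = of_real (real N * b + (a - b))"
      using that by (simp add: sum.distrib flip: of_real_sum)
    also have "real N * b + (a - b) = 1/n"
    proof -
      have "real N = n^2" by (simp add: N_def n_def)
      then have "real N * b + (a - b) = b * (n^2 - 1) + a" by (simp add: algebra_simps)
      also have "\<dots> = 1/n" using hb n by (simp add: field_simps)
      finally show ?thesis .
    qed
    finally show ?thesis .
  qed
  have tMA: "mtrace (M ** A) = of_real S"
    by (simp add: M_def S_def tr_sum_l tr_scale_l cc power2_eq_square flip: of_real_sum of_real_mult)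
  have tAM: "mtrace (A ** M) = of_real S" using tMA tr_comm by metis
  have tM: "mtrace M = of_real (1/n)"
  proof -
    have "mtrace M = mtrace (M ** mat 1)" by simp
    also have "\<dots> = (\<Sum>\<alpha><N. of_real (c \<alpha> * (1/n)))"
      by (simp only: M_def tr_sum_l tr_scale_l) (simp add: tPI)
    also have "\<dots> = of_real (1/n)" by (simp only: of_real_sum[symmetric] sum_distrib_right[symmetric] sumc) simp
    finally show ?thesis .
  qed
  have tPM: "mtrace (P \<alpha> ** M) = of_real (b + (a - b) * c \<alpha>)" if "\<alpha> < N" for \<alpha>
  proof -
    have "mtrace (P \<alpha> ** M) = (\<Sum>\<beta><N. of_real (c \<beta> * (b + (if \<beta> = \<alpha> then a - b else 0))))"
      by (simp add: M_def tr_sum_r tr_scale_r TPP that)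
    also have "\<dots> = of_real (b * (\<Sum>\<beta><N. c \<beta>) + (a - b) * c \<alpha>)"
    proof -
      have "(\<Sum>\<beta><N. c \<beta> * (b + (if \<beta> = \<alpha> then a - b else 0)))
          = (\<Sum>\<beta><N. b * c \<beta> + (if \<beta> = \<alpha> then (a - b) * c \<alpha> else 0))"
        by (intro sum.cong) (auto simp: algebra_simps)
      also have "\<dots> = b * (\<Sum>\<beta><N. c \<beta>) + (a - b) * c \<alpha>"
        using that by (simp add: sum.distrib sum_distrib_left)
      finally show ?thesis by (simp only: of_real_sum[symmetric])
    qed
    finally show ?thesis using sumc by simp
  qed
  have tMM: "mtrace (M ** M) = of_real (b + (a - b) * S)"
  proof -
    have "mtrace (M ** M) = (\<Sum>\<alpha><N. of_real (c \<alpha> * (b + (a - b) * c \<alpha>)))"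
    proof -
      have "mtrace (M ** M) = (\<Sum>\<alpha><N. of_real (c \<alpha>) * mtrace (P \<alpha> ** M))"
        by (subst (1) M_def) (simp only: tr_sum_l tr_scale_l)
      also have "\<dots> = (\<Sum>\<alpha><N. of_real (c \<alpha>) * of_real (b + (a - b) * c \<alpha>))"
        by (intro sum.cong refl) (simp add: tPM)
      finally show ?thesis by simp
    qed
    also have "\<dots> = of_real (b * (\<Sum>\<alpha><N. c \<alpha>) + (a - b) * S)"
    proof -
      have "(\<Sum>\<alpha><N. c \<alpha> * (b + (a - b) * c \<alpha>)) = b * (\<Sum>\<alpha><N. c \<alpha>) + (a - b) * S"
        unfolding S_def sum_distrib_left sum.distrib[symmetric] by (intro sum.cong) (auto simp: power2_eq_square algebra_simps)
      then show ?thesis by (simp only: of_real_sum[symmetric])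
    qed
    finally show ?thesis using sumc by simp
  qed
  define r where "r = Re (mtrace (A ** A))"
  have tAA: "mtrace (A ** A) = of_real r" using tr_herm_of_real[OF hA hA] r_def by simp
  have r1: "r \<le> 1" using density_purity[OF dA] r_def by simp
  define l where "l = a - b"
  define m where "m = n * b"
  have tI: "mtrace (mat 1 :: complex^'n^'n) = of_real n" by (simp add: tr_id n_def)
  have hM: "hermitian M" unfolding M_def by (intro herm_sum herm_scale hP) simp
  define X where "X = M - of_real l *s A - of_real m *s mat 1"
  have hX: "hermitian X" unfolding X_def by (intro herm_diff herm_scale hM hA herm_id)
  have "mtrace (X ** X) = of_real (b + (a-b)*S - 2*l*S - 2*m/n + l^2*r + 2*l*m + m^2*n)"
    unfolding X_def
    apply (simp only: tr_diff_l tr_diff_r tr_scale_l tr_scale_r)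
    apply (simp add: tMM tMA tAM tM tAA trA tI)
    apply (simp add: algebra_simps power2_eq_square)
    done
  with tr_herm_sq[OF hX] have E: "0 \<le> b + (a-b)*S - 2*l*S - 2*m/n + l^2*r + 2*l*m + m^2*n" by simp
  have npos: "n > 0" using n by simp
  have l_eq: "l = 1/n - n^2*b"
  proof -
    have e: "b * n^2 * n - b * n = 1 - n * a" using hb by (simp add: algebra_simps)
    have "l * n = 1 - n^2 * b * n" unfolding l_def using e by (simp add: algebra_simps)
    then have "l = (1 - n^2 * b * n) / n" using npos by (simp add: field_simps)
    also have "\<dots> = 1/n - n^2*b" using npos by (simp add: diff_divide_distrib)
    finally show ?thesis .
  qed
  have key: "n*b*l = b - n^3*b^2" unfolding l_eq using npos by (simp add: field_simps power2_eq_square power3_eq_cube)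
  have lpos: "l > 0"
  proof -
    have "a * n^3 > 1" using ha npos by (simp add: field_simps)
    then have "a * n * (n^2 - 1) > 1 - n * a" by (simp add: algebra_simps power2_eq_square power3_eq_cube)
    then have "a > b" unfolding b_def using npos n21 by (simp add: field_simps)
    then show ?thesis by (simp add: l_def)
  qed
  have "l * S \<le> l * (l * r + n * b)"
  proof -
    have "2*m/n = 2*b" using npos by (simp add: m_def)
    moreover have "m^2*n = n^3*b^2" by (simp add: m_def power2_eq_square power3_eq_cube)
    moreover have "2*l*m = 2*l*(n*b)" by (simp add: m_def)
    ultimately have "0 \<le> b + (a-b)*S - 2*l*S - 2*b + l^2*r + 2*l*(n*b) + n^3*b^2"
      using E by linarith
    then show ?thesis using key unfolding l_def by (simp add: algebra_simps power2_eq_square)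
  qed
  then have "S \<le> l * r + n * b" using lpos by simp
  also have "\<dots> \<le> l + n * b" using r1 lpos by simp
  also have "l + n * b = (a * n^2 + 1) / (n * (n + 1))"
  proof -
    have n1: "n - 1 > 0" using n by simp
    have D: "n*(n-1)*(n+1) = n*(n^2-1)" by (simp add: algebra_simps power2_eq_square)
    have "((n-1)*b) * (n*(n+1)) = b * (n*(n-1)*(n+1))" by (simp add: algebra_simps)
    also have "\<dots> = b * (n*(n^2-1))" by (simp only: D)
    also have "\<dots> = 1 - n*a" by (rule hb0)
    finally have "(n - 1) * b = (1 - n*a) / (n*(n+1))" using npos by (simp add: eq_divide_eq)
    moreover have "l + n * b = a + (n - 1) * b" by (simp add: l_def algebra_simps)
    ultimately have "l + n * b = a + (1 - n*a) / (n*(n+1))" by simp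
    also have "\<dots> = (a * n^2 + 1) / (n * (n + 1))"
    proof -
      have pos: "n * (n+1) \<noteq> 0" using npos by simp
      show ?thesis by (subst add_divide_eq_iff[OF pos]) (simp add: algebra_simps power2_eq_square)
    qed
    finally show ?thesis .
  qed
  finally show ?thesis unfolding S_def c_def N_def n_def .
qed



lemma sum_pair: "(\<Sum>c\<in>(UNIV::('a::finite\<times>'b::finite) set). f c) = (\<Sum>x\<in>UNIV. \<Sum>y\<in>UNIV. f (x,y))"
  by (simp add: sum.cartesian_product)

lemma tr_kron: "mtrace (kron P Q ** kron A B) = mtrace (P ** A) * mtrace (Q ** B)"
  unfolding tr_mul sum_product
  apply (simp add: kron_def sum_pair)
  apply (intro sum.cong refl)
  apply (simp add: mult_ac)
  done

lemma sum_inj_le: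
  fixes f :: "nat \<Rightarrow> real"
  assumes "inj_on \<sigma> {..<d}" "\<sigma> ` {..<d} \<subseteq> {..<N}" "\<And>x. 0 \<le> f x"
  shows "(\<Sum>j<d. f (\<sigma> j)) \<le> (\<Sum>\<alpha><N. f \<alpha>)"
proof -
  have "(\<Sum>j<d. f (\<sigma> j)) = (\<Sum>\<alpha>\<in>\<sigma> ` {..<d}. f \<alpha>)"
    using sum.reindex[OF assms(1), of f] by simp
  also have "\<dots> \<le> (\<Sum>\<alpha><N. f \<alpha>)"
    by (rule sum_mono2) (use assms in auto)
  finally show ?thesis .
qed

theorem theorem1:
  fixes \<rho> :: "complex^('a::finite \<times> 'b::finite)^('a \<times> 'b)"
    and P :: "nat \<Rightarrow> complex^'a^'a" and Q :: "nat \<Rightarrow> complex^'b^'b"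
    and a1 a2 :: real
  assumes "CARD('a) \<ge> 2" and "CARD('b) \<ge> 2"
    and "density \<rho>"
    and "general_sic_povm P a1" and "general_sic_povm Q a2"
    and "separable \<rho>"
  shows "J_val P Q \<rho> \<le>
    1/2 * ((a1 * real CARD('a)^2 + 1) / (real CARD('a) * (real CARD('a) + 1))
         + (a2 * real CARD('b)^2 + 1) / (real CARD('b) * (real CARD('b) + 1)))"
proof -
  define d1 where "d1 = CARD('a)"
  define d2 where "d2 = CARD('b)"
  define d where "d = min (d1^2) (d2^2)"
  define K1 where "K1 = (a1 * real CARD('a)^2 + 1) / (real CARD('a) * (real CARD('a) + 1))"
  define K2 where "K2 = (a2 * real CARD('b)^2 + 1) / (real CARD('b) * (real CARD('b) + 1))"
  obtain m p and A :: "nat \<Rightarrow> complex^'a^'a" and B :: "nat \<Rightarrow> complex^'b^'b" where sep: "\<forall>i<m. 0 \<le> p i \<and> density (A i) \<and> density (B i)"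
    "(\<Sum>i<m. p i) = 1" "\<rho> = (\<Sum>i<m. of_real (p i) *s kron (A i) (B i))"
    using assms(6) unfolding separable_def by (elim exE conjE) (rule that)
  have hP: "hermitian (P \<alpha>)" if "\<alpha> < d1^2" for \<alpha>
    using assms(4) that unfolding general_sic_povm_def Let_def d1_def psd_def by auto
  have hQ: "hermitian (Q \<alpha>)" if "\<alpha> < d2^2" for \<alpha>
    using assms(5) that unfolding general_sic_povm_def Let_def d2_def psd_def by auto
  have hA: "hermitian (A i)" "hermitian (B i)" if "i < m" for i
    using sep(1) that by (auto simp: density_def psd_def)
  define x where "x i \<alpha> = Re (mtrace (P \<alpha> ** A i))" for i \<alpha>
  define y where "y i \<alpha> = Re (mtrace (Q \<alpha> ** B i))" for i \<alpha>
  have xr: "mtrace (P \<alpha> ** A i) = of_real (x i \<alpha>)" if "\<alpha> < d1^2" "i < m" for i \<alpha>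
    unfolding x_def by (rule tr_herm_of_real[OF hP[OF that(1)] hA(1)[OF that(2)]])
  have yr: "mtrace (Q \<alpha> ** B i) = of_real (y i \<alpha>)" if "\<alpha> < d2^2" "i < m" for i \<alpha>
    unfolding y_def by (rule tr_herm_of_real[OF hQ[OF that(1)] hA(2)[OF that(2)]])
  have bx: "(\<Sum>\<alpha><d1^2. (x i \<alpha>)^2) \<le> K1" if "i < m" for i
    unfolding x_def K1_def d1_def using sic_bound[OF assms(1) assms(4), of "A i"] sep(1) that by simp
  have bY: "(\<Sum>\<alpha><d2^2. (y i \<alpha>)^2) \<le> K2" if "i < m" for i
    unfolding y_def K2_def d2_def using sic_bound[OF assms(2) assms(5), of "B i"] sep(1) that by simp
  define val where "val \<sigma> \<tau> = Re (\<Sum>j<d. mtrace (kron (P (\<sigma> j)) (Q (\<tau> j)) ** \<rho>))" for \<sigma> \<tau> :: "nat \<Rightarrow> nat"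
  define C where "C \<sigma> \<tau> \<longleftrightarrow> inj_on \<sigma> {..<d} \<and> \<sigma> ` {..<d} \<subseteq> {..<d1^2} \<and>
            inj_on \<tau> {..<d} \<and> \<tau> ` {..<d} \<subseteq> {..<d2^2}" for \<sigma> \<tau> :: "nat \<Rightarrow> nat"
  have J: "J_val P Q \<rho> = Max {val \<sigma> \<tau> | \<sigma> \<tau>. C \<sigma> \<tau>}"
    unfolding J_val_def Let_def val_def C_def d_def d1_def d2_def by simp
  have bound: "val \<sigma> \<tau> \<le> 1/2 * (K1 + K2)" if c: "C \<sigma> \<tau>" for \<sigma> \<tau>
  proof -
    have s1: "\<sigma> j < d1^2" "\<tau> j < d2^2" if "j < d" for j using c that unfolding C_def by auto
    have tj: "mtrace (kron (P (\<sigma> j)) (Q (\<tau> j)) ** \<rho>) = of_real (\<Sum>i<m. p i * (x i (\<sigma> j) * y i (\<tau> j)))"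
      if "j < d" for j
      unfolding sep(3) tr_sum_r tr_scale_r tr_kron of_real_sum
      by (intro sum.cong refl) (simp add: xr yr s1[OF that])
    have "val \<sigma> \<tau> = (\<Sum>j<d. \<Sum>i<m. p i * (x i (\<sigma> j) * y i (\<tau> j)))"
      unfolding val_def by (simp add: tj)
    also have "\<dots> = (\<Sum>i<m. p i * (\<Sum>j<d. x i (\<sigma> j) * y i (\<tau> j)))"
      by (subst sum.swap) (simp add: sum_distrib_left)
    also have "\<dots> \<le> (\<Sum>i<m. p i * (1/2 * (K1 + K2)))"
    proof (rule sum_mono)
      fix i assume "i \<in> {..<m}"
      then have i: "i < m" by simp
      have "(\<Sum>j<d. x i (\<sigma> j) * y i (\<tau> j)) \<le> (\<Sum>j<d. 1/2 * ((x i (\<sigma> j))^2 + (y i (\<tau> j))^2))"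
      proof (rule sum_mono)
        fix j
        have "0 \<le> (x i (\<sigma> j) - y i (\<tau> j))^2" by simp
        then show "x i (\<sigma> j) * y i (\<tau> j) \<le> 1/2 * ((x i (\<sigma> j))^2 + (y i (\<tau> j))^2)"
          by (simp add: power2_eq_square algebra_simps)
      qed
      also have "\<dots> = 1/2 * ((\<Sum>j<d. (x i (\<sigma> j))^2) + (\<Sum>j<d. (y i (\<tau> j))^2))"
        by (simp only: sum_distrib_left[symmetric] sum.distrib)
      also have "\<dots> \<le> 1/2 * ((\<Sum>\<alpha><d1^2. (x i \<alpha>)^2) + (\<Sum>\<alpha><d2^2. (y i \<alpha>)^2))"
        using sum_inj_le[of \<sigma> d "d1^2" "\<lambda>\<alpha>. (x i \<alpha>)^2"] sum_inj_le[of \<tau> d "d2^2" "\<lambda>\<alpha>. (y i \<alpha>)^2"] c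
        unfolding C_def by simp
      also have "\<dots> \<le> 1/2 * (K1 + K2)" using bx[OF i] bY[OF i] by simp
      finally show "p i * (\<Sum>j<d. x i (\<sigma> j) * y i (\<tau> j)) \<le> p i * (1/2 * (K1 + K2))"
        using sep(1) i by (intro mult_left_mono) auto
    qed
    also have "\<dots> = 1/2 * (K1 + K2)" using sep(2) by (simp only: sum_distrib_right[symmetric] mult_1)
    finally show ?thesis .
  qed
  have fin: "finite {val \<sigma> \<tau> | \<sigma> \<tau>. C \<sigma> \<tau>}"
  proof (rule finite_subset)
    show "{val \<sigma> \<tau> | \<sigma> \<tau>. C \<sigma> \<tau>} \<subseteq> (\<lambda>(\<sigma>, \<tau>). val \<sigma> \<tau>) ` ((PiE {..<d} (\<lambda>_. {..<d1^2})) \<times> (PiE {..<d} (\<lambda>_. {..<d2^2})))"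
    proof clarify
      fix \<sigma> \<tau> assume c: "C \<sigma> \<tau>"
      have "val \<sigma> \<tau> = val (restrict \<sigma> {..<d}) (restrict \<tau> {..<d})"
        unfolding val_def by (intro arg_cong[where f=Re] sum.cong) auto
      moreover have "(restrict \<sigma> {..<d}, restrict \<tau> {..<d}) \<in> (PiE {..<d} (\<lambda>_. {..<d1^2})) \<times> (PiE {..<d} (\<lambda>_. {..<d2^2}))"
        using c unfolding C_def by (auto simp: restrict_PiE_iff)
      ultimately show "val \<sigma> \<tau> \<in> (\<lambda>(\<sigma>, \<tau>). val \<sigma> \<tau>) ` ((PiE {..<d} (\<lambda>_. {..<d1^2})) \<times> (PiE {..<d} (\<lambda>_. {..<d2^2})))"
        by (intro image_eqI[where x="(restrict \<sigma> {..<d}, restrict \<tau> {..<d})"]) simp_all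
    qed
  qed (intro finite_imageI finite_cartesian_product finite_PiE; simp)
  have ne: "{val \<sigma> \<tau> | \<sigma> \<tau>. C \<sigma> \<tau>} \<noteq> {}"
  proof -
    have "C id id" unfolding C_def d_def by auto
    then have "val id id \<in> {val \<sigma> \<tau> | \<sigma> \<tau>. C \<sigma> \<tau>}"
      unfolding mem_Collect_eq by (intro exI[of _ id] conjI refl)
    then show ?thesis by (metis empty_iff)
  qed
  have "J_val P Q \<rho> \<le> 1/2 * (K1 + K2)"
    unfolding J by (rule Max.boundedI[OF fin ne]) (elim CollectE exE conjE, hypsubst, rule bound, assumption)
  then show ?thesis unfolding K1_def K2_def .
qed

end
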